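(* Suppose QEPmin is in the easy case. For $k\le k_{\max}$ let $\mu^{(k)}$ be the optimal value of rQEPmin (equivalently of rLGopt), let $(\mu^{(k)},x^{(k)})$ be the minimizer of rLGopt and $u^{(k)}=Q_kx^{(k)}$. Then $(\mu^{(k_{\max})},u^{(k_{\max})})$ solves LGopt, and $v^{(k_{\max})}=u^{(k_{\max})}+n_0$ is the unique minimizer of CRQopt.
   Context: Let $A\in\mathbb{R}^{n\times n}$ be symmetric, $C\in\mathbb{R}^{n\times m}$ ($m<n$) full column rank, $b\in\mathbb{R}^m$, $n_0=C(C^{\top}C)^{-1}b$ with $\|n_0\|<1$, $\gamma=\sqrt{1-\|n_0\|^2}$, $P=I-C(C^{\top}C)^{-1}C^{\top}$ (orthogonal projector onto $\mathcal N(C^{\top})$), $b_0=PAn_0\neq0$. CRQopt: minimize $v^{\top}Av$ s.t. $v^{\top}v=1$, $C^{\top}v=b$. LGopt: minimize $\lambda$ over $(\lambda,u)$ with $(PAP-\lambda I)u=-b_0$, $\|u\|=\gamma$, $u\in\mathcal N(C^{\top})$. QEPmin: minimize $\lambda$ over $(\lambda,z)$, $\lambda\in\mathbb{R}$, $0\ne z\in\mathcal N(C^{\top})$, $(PAP-\lambda I)^2z=\gamma^{-2}b_0b_0^{\top}z$; it is in the hard case if it has a minimizer with $b_0^{\top}z=0$, and in the easy case otherwise. Lanczos process with $M=PAP$: $q_0=0$, $\beta_1=\|b_0\|$, $q_1=b_0/\|b_0\|$, for $j=1,2,\dots$: $\alpha_j=q_j^{\top}Mq_j$, $\widehat q_{j+1}=Mq_j-\alpha_jq_j-\beta_jq_{j-1}$,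 $\beta_{j+1}=\|\widehat q_{j+1}\|$, $q_{j+1}=\widehat q_{j+1}/\beta_{j+1}$ when $\beta_{j+1}>0$; $k_{\max}$ is the smallest $k$ with $\beta_{k+1}=0$. $Q_k=[q_1,\dots,q_k]$, $T_k=Q_k^{\top}PAPQ_k$ (tridiagonal). rLGopt: minimize $\lambda$ over $(\lambda,x)\in\mathbb{R}\times\mathbb{R}^k$ with $(T_k-\lambda I)x=-\|b_0\|e_1$, $\|x\|=\gamma$. rQEPmin: minimize $\lambda$ over $\lambda\in\mathbb{R}$, $0\ne w\in\mathbb{R}^k$ with $(T_k-\lambda I)^2w=\gamma^{-2}\|b_0\|^2e_1e_1^{\top}w$. *)

theory Defs
  imports "HOL-Analysis.Analysis"
begin

definition n0 :: "real^'m^'n \<Rightarrow> real^'m \<Rightarrow> real^'n" where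
  "n0 C b = C *v (matrix_inv (transpose C ** C) *v b)"

definition gam :: "real^'m^'n \<Rightarrow> real^'m \<Rightarrow> real" where
  "gam C b = sqrt (1 - (norm (n0 C b))^2)"

definition Pproj :: "real^'m^'n \<Rightarrow> real^'n^'n" where
  "Pproj C = mat 1 - C ** matrix_inv (transpose C ** C) ** transpose C"

definition b0 :: "real^'n^'n \<Rightarrow> real^'m^'n \<Rightarrow> real^'m \<Rightarrow> real^'n" where
  "b0 A C b = Pproj C *v (A *v n0 C b)"

definition Mmat :: "real^'n^'n \<Rightarrow> real^'m^'n \<Rightarrow> real^'n^'n" where
  "Mmat A C = Pproj C ** A ** Pproj C"

text \<open>Lanczos process with matrix M and start vector r (= b0).
  lanczos M r j = (q_j, q_(j+1), beta_(j+1)), with q_0 = 0.\<close>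

fun lanczos :: "real^'n^'n \<Rightarrow> real^'n \<Rightarrow> nat \<Rightarrow> ((real^'n) \<times> (real^'n) \<times> real)" where
  "lanczos M r 0 = (0, (1 / norm r) *\<^sub>R r, norm r)"
| "lanczos M r (Suc j) =
     (let (qp, q, \<beta>) = lanczos M r j;
          \<alpha> = q \<bullet> (M *v q);
          qh = M *v q - \<alpha> *\<^sub>R q - \<beta> *\<^sub>R qp;
          \<beta>' = norm qh
      in (q, (1 / \<beta>') *\<^sub>R qh, \<beta>'))"

definition lz_q :: "real^'n^'n \<Rightarrow> real^'n \<Rightarrow> nat \<Rightarrow> real^'n" where
  "lz_q M r j = fst (lanczos M r j)"

text \<open>beta_j for j \<ge> 1\<close>
definition lz_beta :: "real^'n^'n \<Rightarrow> real^'n \<Rightarrow> nat \<Rightarrow> real" where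
  "lz_beta M r j = snd (snd (lanczos M r (j - 1)))"

definition kmax :: "real^'n^'n \<Rightarrow> real^'n \<Rightarrow> nat" where
  "kmax M r = (LEAST k. 1 \<le> k \<and> lz_beta M r (k + 1) = 0)"

text \<open>T_k = Q_k^T M Q_k, entries indexed by i, j in {1..k}\<close>
definition Tk :: "real^'n^'n \<Rightarrow> real^'n \<Rightarrow> nat \<Rightarrow> nat \<Rightarrow> real" where
  "Tk M r i j = lz_q M r i \<bullet> (M *v lz_q M r j)"

text \<open>Q_k x for x in R^k (x represented as nat \<Rightarrow> real, coordinates 1..k)\<close>
definition Qmul :: "real^'n^'n \<Rightarrow> real^'n \<Rightarrow> nat \<Rightarrow> (nat \<Rightarrow> real) \<Rightarrow> real^'n" where
  "Qmul M r k x = (\<Sum>j\<in>{1..k}. x j *\<^sub>R lz_q M r j)"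

definition rLG_feasible :: "real^'n^'n \<Rightarrow> real^'n \<Rightarrow> real \<Rightarrow> nat \<Rightarrow> real \<Rightarrow> (nat \<Rightarrow> real) \<Rightarrow> bool" where
  "rLG_feasible M r g k mu x \<longleftrightarrow>
     (\<forall>i. i \<notin> {1..k} \<longrightarrow> x i = 0) \<and>
     (\<forall>i\<in>{1..k}. (\<Sum>j\<in>{1..k}. Tk M r i j * x j) - mu * x i = - (if i = 1 then norm r else 0)) \<and>
     sqrt (\<Sum>i\<in>{1..k}. (x i)^2) = g"

definition rLG_minimizer :: "real^'n^'n \<Rightarrow> real^'n \<Rightarrow> real \<Rightarrow> nat \<Rightarrow> real \<Rightarrow> (nat \<Rightarrow> real) \<Rightarrow> bool" where
  "rLG_minimizer M r g k mu x \<longleftrightarrow> rLG_feasible M r g k mu x \<and>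
     (\<forall>mu' x'. rLG_feasible M r g k mu' x' \<longrightarrow> mu \<le> mu')"

definition LG_feasible :: "real^'n^'n \<Rightarrow> real^'m^'n \<Rightarrow> real^'m \<Rightarrow> real \<Rightarrow> real^'n \<Rightarrow> bool" where
  "LG_feasible A C b mu u \<longleftrightarrow>
     (Mmat A C - mu *\<^sub>R mat 1) *v u = - b0 A C b \<and> norm u = gam C b \<and> transpose C *v u = 0"

definition LG_solution :: "real^'n^'n \<Rightarrow> real^'m^'n \<Rightarrow> real^'m \<Rightarrow> real \<Rightarrow> real^'n \<Rightarrow> bool" where
  "LG_solution A C b mu u \<longleftrightarrow> LG_feasible A C b mu u \<and>
     (\<forall>mu' u'. LG_feasible A C b mu' u' \<longrightarrow> mu \<le> mu')"

definition QEP_feasible :: "real^'n^'n \<Rightarrow> real^'m^'n \<Rightarrow> real^'m \<Rightarrow> real \<Rightarrow> real^'n \<Rightarrow> bool" where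
  "QEP_feasible A C b mu z \<longleftrightarrow> z \<noteq> 0 \<and> transpose C *v z = 0 \<and>
     ((Mmat A C - mu *\<^sub>R mat 1) ** (Mmat A C - mu *\<^sub>R mat 1)) *v z
       = (1 / (gam C b)^2) *\<^sub>R ((b0 A C b \<bullet> z) *\<^sub>R b0 A C b)"

definition QEP_minimizer :: "real^'n^'n \<Rightarrow> real^'m^'n \<Rightarrow> real^'m \<Rightarrow> real \<Rightarrow> real^'n \<Rightarrow> bool" where
  "QEP_minimizer A C b mu z \<longleftrightarrow> QEP_feasible A C b mu z \<and>
     (\<forall>mu' z'. QEP_feasible A C b mu' z' \<longrightarrow> mu \<le> mu')"

definition QEP_hard_case :: "real^'n^'n \<Rightarrow> real^'m^'n \<Rightarrow> real^'m \<Rightarrow> bool" where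
  "QEP_hard_case A C b \<longleftrightarrow> (\<exists>mu z. QEP_minimizer A C b mu z \<and> b0 A C b \<bullet> z = 0)"

definition QEP_easy_case :: "real^'n^'n \<Rightarrow> real^'m^'n \<Rightarrow> real^'m \<Rightarrow> bool" where
  "QEP_easy_case A C b \<longleftrightarrow> \<not> QEP_hard_case A C b"

definition CRQ_feasible :: "real^'m^'n \<Rightarrow> real^'m \<Rightarrow> real^'n \<Rightarrow> bool" where
  "CRQ_feasible C b v \<longleftrightarrow> v \<bullet> v = 1 \<and> transpose C *v v = b"

definition CRQ_minimizer :: "real^'n^'n \<Rightarrow> real^'m^'n \<Rightarrow> real^'m \<Rightarrow> real^'n \<Rightarrow> bool" where
  "CRQ_minimizer A C b v \<longleftrightarrow> CRQ_feasible C b v \<and>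
     (\<forall>v'. CRQ_feasible C b v' \<longrightarrow> v \<bullet> (A *v v) \<le> v' \<bullet> (A *v v'))"

end

theory Submission
  imports Defs
begin

declare transpose_matrix_vector[simp del]


lemma matrix_inv_works:
  fixes G :: "real^'m^'m"
  assumes "invertible G"
  shows "G ** matrix_inv G = mat 1" "matrix_inv G ** G = mat 1"
proof -
  have "\<exists>G'. G ** G' = mat 1 \<and> G' ** G = mat 1" using assms unfolding invertible_def by blast
  from someI_ex[OF this] show "G ** matrix_inv G = mat 1" "matrix_inv G ** G = mat 1"
    unfolding matrix_inv_def by auto
qed

lemma inner_C: "(x::real^'n) \<bullet> ((C::real^'m^'n) *v w) = (transpose C *v x) \<bullet> w"
  by (metis dot_lmul_matrix inner_commute transpose_matrix_vector)

lemma inner_A: "(x::real^'n) \<bullet> ((A::real^'n^'n) *v y) = (transpose A *v x) \<bullet> y"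
  by (metis dot_lmul_matrix inner_commute transpose_matrix_vector)

lemma G_inv:
  fixes C :: "real^'m^'n"
  assumes "rank C = CARD('m)"
  shows "invertible (transpose C ** C)"
proof -
  have injC: "inj ((*v) C)" using assms full_rank_injective by blast
  have "inj ((*v) (transpose C ** C))"
  proof (rule injI)
    fix x y assume "(transpose C ** C) *v x = (transpose C ** C) *v y"
    then have "(transpose C ** C) *v (x - y) = 0" by (simp add: matrix_vector_mult_diff_distrib)
    then have "transpose C *v (C *v (x - y)) = 0" by (simp add: matrix_vector_mul_assoc)
    then have "(C *v (x - y)) \<bullet> (C *v (x - y)) = 0" by (simp add: inner_C)
    then have "C *v (x - y) = 0" by simp
    then have "C *v x = C *v y" by (simp add: matrix_vector_mult_diff_distrib)
    then show "x = y" using injC by (simp add: inj_eq)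
  qed
  then show ?thesis
    using matrix_left_invertible_injective invertible_left_inverse by blast
qed

lemma Pproj_apply: "Pproj C *v x = x - C *v (matrix_inv (transpose C ** C) *v (transpose C *v x))"
  unfolding Pproj_def by (simp add: matrix_vector_mult_diff_rdistrib matrix_vector_mul_assoc[symmetric])

lemma CtP:
  fixes C :: "real^'m^'n"
  assumes "rank C = CARD('m)"
  shows "transpose C *v (Pproj C *v x) = 0"
proof -
  have "transpose C *v (C *v (matrix_inv (transpose C ** C) *v (transpose C *v x)))
      = ((transpose C ** C) ** matrix_inv (transpose C ** C)) *v (transpose C *v x)"
    by (simp add: matrix_vector_mul_assoc matrix_mul_assoc)
  also have "\<dots> = transpose C *v x" using matrix_inv_works[OF G_inv[OF assms]] by simp
  finally show ?thesis unfolding Pproj_apply by (simp add: matrix_vector_mult_diff_distrib)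
qed

lemma P_fix:
  assumes "transpose C *v u = 0"
  shows "Pproj C *v u = u"
  unfolding Pproj_apply using assms by simp

lemma inner_P:
  assumes "transpose C *v x = 0"
  shows "x \<bullet> (Pproj C *v y) = x \<bullet> y"
  unfolding Pproj_apply by (simp add: inner_diff_right inner_C assms)

lemma M_apply: "Mmat A C *v x = Pproj C *v (A *v (Pproj C *v x))"
  unfolding Mmat_def by (simp add: matrix_vector_mul_assoc[symmetric])

lemma M_S:
  fixes C :: "real^'m^'n"
  assumes "rank C = CARD('m)"
  shows "transpose C *v (Mmat A C *v x) = 0"
  unfolding M_apply by (rule CtP[OF assms])

lemma M_inner_S:
  assumes "transpose C *v x = 0" "transpose C *v y = 0"
  shows "x \<bullet> (Mmat A C *v y) = x \<bullet> (A *v y)"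
  unfolding M_apply using assms by (simp add: inner_P P_fix)

lemma M_sym_S:
  assumes "transpose A = A" "transpose C *v x = 0" "transpose C *v y = 0"
  shows "x \<bullet> (Mmat A C *v y) = y \<bullet> (Mmat A C *v x)"
  using assms by (metis M_inner_S inner_A inner_commute)

lemma Ct_n0:
  fixes C :: "real^'m^'n"
  assumes "rank C = CARD('m)"
  shows "transpose C *v n0 C b = b"
proof -
  have "transpose C *v n0 C b = ((transpose C ** C) ** matrix_inv (transpose C ** C)) *v b"
    unfolding n0_def by (simp add: matrix_vector_mul_assoc matrix_mul_assoc)
  then show ?thesis using matrix_inv_works[OF G_inv[OF assms]] by simp
qed

lemma S_n0_orth:
  assumes "transpose C *v u = 0"
  shows "u \<bullet> n0 C b = 0"
  unfolding n0_def by (simp add: inner_C assms)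

lemma b0_S:
  fixes C :: "real^'m^'n"
  assumes "rank C = CARD('m)"
  shows "transpose C *v b0 A C b = 0"
  unfolding b0_def by (rule CtP[OF assms])

lemma inner_b0:
  assumes "transpose C *v u = 0"
  shows "u \<bullet> (A *v n0 C b) = u \<bullet> b0 A C b"
  unfolding b0_def using assms by (simp add: inner_P)

lemma Mminus_apply: "(X - mu *\<^sub>R mat 1) *v (u::real^'n) = X *v u - mu *\<^sub>R u"
  by (simp add: matrix_vector_mult_diff_rdistrib scaleR_matrix_vector_assoc[symmetric])



locale lzc =
  fixes M :: "real^'n^'n" and r :: "real^'n" and S :: "(real^'n) set"
  assumes subS: "subspace S"
    and MS: "\<And>x. x \<in> S \<Longrightarrow> M *v x \<in> S"
    and symS: "\<And>x y. x \<in> S \<Longrightarrow> y \<in> S \<Longrightarrow> x \<bullet> (M *v y) = y \<bullet> (M *v x)"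
    and rS: "r \<in> S" and rnz: "r \<noteq> 0"
begin

abbreviation "q \<equiv> lz_q M r"
abbreviation "\<beta> \<equiv> lz_beta M r"

lemma q0: "q 0 = 0" by (simp add: lz_q_def)
lemma q1: "q 1 = (1 / norm r) *\<^sub>R r" by (simp add: lz_q_def Let_def)
lemma beta1: "\<beta> 1 = norm r" by (simp add: lz_beta_def)

lemma lz_step:
  "q (Suc (Suc j)) = (1 / norm (M *v q (Suc j) - (q (Suc j) \<bullet> (M *v q (Suc j))) *\<^sub>R q (Suc j) - \<beta> (Suc j) *\<^sub>R q j))
      *\<^sub>R (M *v q (Suc j) - (q (Suc j) \<bullet> (M *v q (Suc j))) *\<^sub>R q (Suc j) - \<beta> (Suc j) *\<^sub>R q j)
   \<and> \<beta> (Suc (Suc j)) = norm (M *v q (Suc j) - (q (Suc j) \<bullet> (M *v q (Suc j))) *\<^sub>R q (Suc j) - \<beta> (Suc j) *\<^sub>R q j)"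
proof -
  obtain a b c where L: "lanczos M r j = (a, b, c)" by (cases "lanczos M r j") auto
  have qj: "q j = a" using L by (simp add: lz_q_def)
  have qSj: "q (Suc j) = b" using L by (simp add: lz_q_def Let_def)
  have bSj: "\<beta> (Suc j) = c" using L by (simp add: lz_beta_def)
  show ?thesis using L unfolding qj qSj bSj by (simp add: lz_q_def lz_beta_def Let_def)
qed

lemma lz_rec:
  "M *v q (Suc j) = \<beta> (Suc (Suc j)) *\<^sub>R q (Suc (Suc j)) + (q (Suc j) \<bullet> (M *v q (Suc j))) *\<^sub>R q (Suc j)
      + \<beta> (Suc j) *\<^sub>R q j"
proof -
  define qh where "qh = M *v q (Suc j) - (q (Suc j) \<bullet> (M *v q (Suc j))) *\<^sub>R q (Suc j) - \<beta> (Suc j) *\<^sub>R q j"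
  have "\<beta> (Suc (Suc j)) *\<^sub>R q (Suc (Suc j)) = qh"
    using lz_step[of j] unfolding qh_def[symmetric] by (cases "qh = 0") auto
  then show ?thesis unfolding qh_def by (simp add: algebra_simps)
qed

lemma q_S: "q j \<in> S"
proof -
  have "q j \<in> S \<and> q (Suc j) \<in> S"
  proof (induction j)
    case 0 then show ?case using q0 q1 rS subS by (simp add: subspace_0 subspace_scale)
  next
    case (Suc j)
    then show ?case using lz_step[of j] MS subS
      by (simp add: subspace_diff subspace_scale)
  qed
  then show ?thesis by simp
qed

definition ON :: "nat \<Rightarrow> bool" where
  "ON j \<longleftrightarrow> (\<forall>i l. 1 \<le> i \<longrightarrow> i \<le> j \<longrightarrow> 1 \<le> l \<longrightarrow> l \<le> j \<longrightarrow> q i \<bullet> q l = (if i = l then 1 else 0))"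

lemma ON_step:
  assumes ON: "ON (Suc p)" and bnz: "\<beta> (Suc (Suc p)) \<noteq> 0"
  shows "ON (Suc (Suc p))"
proof -
  let ?a = "q (Suc p) \<bullet> (M *v q (Suc p))"
  have oth: "q (Suc (Suc p)) \<bullet> q i = 0" if i1: "1 \<le> i" and ip: "i \<le> Suc p" for i
  proof -
    have rec: "\<beta> (Suc (Suc p)) *\<^sub>R q (Suc (Suc p)) = M *v q (Suc p) - ?a *\<^sub>R q (Suc p) - \<beta> (Suc p) *\<^sub>R q p"
      using lz_rec[of p] by (simp add: algebra_simps)
    have "\<beta> (Suc (Suc p)) * (q (Suc (Suc p)) \<bullet> q i) = (M *v q (Suc p)) \<bullet> q i - ?a * (q (Suc p) \<bullet> q i) - \<beta> (Suc p) * (q p \<bullet> q i)"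
      using arg_cong[OF rec, of "\<lambda>v. v \<bullet> q i"] by (simp add: inner_diff_left)
    also have "\<dots> = 0"
    proof -
      have qpp: "q p \<bullet> q (Suc p) = 0"
        using ON unfolding ON_def by (cases p) (auto simp: q0)
      consider "i = Suc p" | "i = p" | "i < p" using ip by linarith
      then show ?thesis
      proof cases
        case 1
        then show ?thesis using symS[OF q_S q_S, of "Suc p" "Suc p"] ON unfolding ON_def
          by (simp add: inner_commute qpp)
      next
        case 2
        then obtain p' where p': "p = Suc p'" using i1 by (cases p) auto
        have "(M *v q (Suc p)) \<bullet> q i = q (Suc p) \<bullet> (M *v q i)"
          using symS[OF q_S q_S, of i "Suc p"] by (simp add: inner_commute)
        also have "\<dots> = \<beta> (Suc p)"
        proof -
          have e: "M *v q i = \<beta> (Suc (Suc p')) *\<^sub>R q (Suc (Suc p')) + (q (Suc p') \<bullet> (M *v q (Suc p'))) *\<^sub>R q (Suc p')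
            + \<beta> (Suc p') *\<^sub>R q p'" using lz_rec[of p'] 2 p' by simp
          have o1: "q (Suc p) \<bullet> q (Suc p') = 0" using ON p' unfolding ON_def by auto
          have o2: "q (Suc p) \<bullet> q p' = 0" using ON p' unfolding ON_def by (cases p') (auto simp: q0)
          have o3: "q (Suc p) \<bullet> q (Suc p) = 1" using ON unfolding ON_def by auto
          show ?thesis unfolding e using o1 o2 o3 p' by (simp add: inner_add_right)
        qed
        finally show ?thesis using 2 ON p' unfolding ON_def by (simp add: qpp inner_commute)
      next
        case 3
        then obtain i' where i': "i = Suc i'" using i1 by (cases i) auto
        have "(M *v q (Suc p)) \<bullet> q i = q (Suc p) \<bullet> (M *v q i)"
          using symS[OF q_S q_S, of i "Suc p"] by (simp add: inner_commute)
        also have "\<dots> = 0"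
        proof -
          have e: "M *v q i = \<beta> (Suc (Suc i')) *\<^sub>R q (Suc (Suc i')) + (q (Suc i') \<bullet> (M *v q (Suc i'))) *\<^sub>R q (Suc i')
            + \<beta> (Suc i') *\<^sub>R q i'" using lz_rec[of i'] i' by simp
          have o1: "q (Suc p) \<bullet> q (Suc (Suc i')) = 0" using ON i' 3 unfolding ON_def by auto
          have o2: "q (Suc p) \<bullet> q (Suc i') = 0" using ON i' 3 unfolding ON_def by auto
          have o3: "q (Suc p) \<bullet> q i' = 0" using ON i' 3 unfolding ON_def by (cases i') (auto simp: q0)
          show ?thesis unfolding e using o1 o2 o3 by (simp add: inner_add_right)
        qed
        finally show ?thesis using 3 i1 ON unfolding ON_def by (simp add: inner_commute)
      qed
    qed
    finally show ?thesis using bnz by simp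
  qed
  have nrm: "q (Suc (Suc p)) \<bullet> q (Suc (Suc p)) = 1"
    using lz_step[of p] bnz by (simp add: inner_commute power2_norm_eq_inner[symmetric] power2_eq_square)
  show ?thesis unfolding ON_def
  proof (intro allI impI)
    fix i l assume h: "1 \<le> i" "i \<le> Suc (Suc p)" "1 \<le> l" "l \<le> Suc (Suc p)"
    consider "i = Suc (Suc p)" "l = Suc (Suc p)" | "i = Suc (Suc p)" "l \<le> Suc p" | "i \<le> Suc p" "l = Suc (Suc p)"
      | "i \<le> Suc p" "l \<le> Suc p" using h by linarith
    then show "q i \<bullet> q l = (if i = l then 1 else 0)"
    proof cases
      case 1 then show ?thesis using nrm by simp
    next
      case 2 then show ?thesis using oth[of l] h by simp
    next
      case 3 then show ?thesis using oth[of i] h by (simp add: inner_commute)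
    next
      case 4 then show ?thesis using ON h unfolding ON_def by simp
    qed
  qed
qed

lemma ON1: "ON 1"
proof -
  have "norm (q 1) = 1" unfolding q1 using rnz by simp
  then have "q 1 \<bullet> q 1 = 1" by (metis power2_norm_eq_inner power_one)
  then show ?thesis unfolding ON_def by (auto simp: le_Suc_eq)
qed

lemma ON_upto:
  assumes "\<And>i. 1 \<le> i \<Longrightarrow> i \<le> Suc j \<Longrightarrow> \<beta> i \<noteq> 0"
  shows "ON (Suc j)"
  using assms
proof (induction j)
  case 0 then show ?case using ON1 by simp
next
  case (Suc j)
  then show ?case using ON_step[of j] by simp
qed


lemma ON_inner: "ON k \<Longrightarrow> i \<in> {1..k} \<Longrightarrow> l \<in> {1..k} \<Longrightarrow> q i \<bullet> q l = (if i = l then 1 else 0)"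
  unfolding ON_def by auto

lemma ON_coeff:
  assumes "ON k" "i \<in> {1..k}"
  shows "q i \<bullet> (\<Sum>j\<in>{1..k}. x j *\<^sub>R q j) = x i"
proof -
  have "q i \<bullet> (\<Sum>j\<in>{1..k}. x j *\<^sub>R q j) = (\<Sum>j\<in>{1..k}. x j * (if i = j then 1 else 0))"
    by (simp add: inner_sum_right ON_inner[OF assms(1) assms(2)])
  also have "\<dots> = (\<Sum>j\<in>{1..k}. if i = j then x j else 0)"
    by (rule sum.cong) auto
  also have "\<dots> = x i" using assms(2) by (simp add: sum.delta)
  finally show ?thesis .
qed

lemma ON_normsq:
  assumes "ON k"
  shows "(\<Sum>j\<in>{1..k}. x j *\<^sub>R q j) \<bullet> (\<Sum>j\<in>{1..k}. x j *\<^sub>R q j) = (\<Sum>j\<in>{1..k}. (x j)^2)"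
proof -
  have "(\<Sum>j\<in>{1..k}. x j *\<^sub>R q j) \<bullet> (\<Sum>j\<in>{1..k}. x j *\<^sub>R q j)
      = (\<Sum>i\<in>{1..k}. x i * (q i \<bullet> (\<Sum>j\<in>{1..k}. x j *\<^sub>R q j)))"
    by (simp add: inner_sum_left)
  also have "\<dots> = (\<Sum>i\<in>{1..k}. x i * x i)"
  proof (rule sum.cong)
    fix i assume i: "i \<in> {1..k}"
    show "x i * (q i \<bullet> (\<Sum>j\<in>{1..k}. x j *\<^sub>R q j)) = x i * x i" using ON_coeff[OF assms i] by simp
  qed simp
  finally show ?thesis by (simp add: power2_eq_square)
qed

lemma ON_orth_zero:
  assumes "ON k" "v \<in> span (q ` {1..k})" "\<And>i. i \<in> {1..k} \<Longrightarrow> q i \<bullet> v = 0"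
  shows "v = 0"
proof -
  have "orthogonal v v"
    by (rule orthogonal_to_span[OF assms(2)]) (use assms(3) in \<open>auto simp: orthogonal_def inner_commute\<close>)
  then show ?thesis by (simp add: orthogonal_def)
qed

lemma ON_expand:
  assumes "ON k" "v \<in> span (q ` {1..k})"
  shows "v = (\<Sum>j\<in>{1..k}. (q j \<bullet> v) *\<^sub>R q j)"
proof -
  let ?w = "(\<Sum>j\<in>{1..k}. (q j \<bullet> v) *\<^sub>R q j)"
  have "?w \<in> span (q ` {1..k})"
    by (intro span_sum span_scale span_base) auto
  then have "v - ?w \<in> span (q ` {1..k})" using assms(2) by (simp add: span_diff)
  moreover have "q i \<bullet> (v - ?w) = 0" if "i \<in> {1..k}" for i
    using ON_coeff[OF assms(1) that, of "\<lambda>j. q j \<bullet> v"] by (simp add: inner_diff_right)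
  ultimately have "v - ?w = 0" using ON_orth_zero[OF assms(1)] by blast
  then show ?thesis by simp
qed

lemma ON_eq:
  assumes "ON k" "v \<in> span (q ` {1..k})" "w \<in> span (q ` {1..k})"
    "\<And>i. i \<in> {1..k} \<Longrightarrow> q i \<bullet> v = q i \<bullet> w"
  shows "v = w"
proof -
  have "v - w = 0"
    by (rule ON_orth_zero[OF assms(1)]) (use assms in \<open>auto simp: span_diff inner_diff_right\<close>)
  then show ?thesis by simp
qed

lemma span_q_S: "span (q ` {1..k}) \<subseteq> S"
  using span_minimal[of "q ` {1..k}" S] q_S subS by auto

lemma beta_zero_ex: "\<exists>k. 1 \<le> k \<and> \<beta> (k + 1) = 0"
proof (rule ccontr)
  assume "\<not> ?thesis"
  then have nz: "\<beta> i \<noteq> 0" if "1 \<le> i" for i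
  proof (cases "i = 1")
    case True then show ?thesis using rnz beta1 by simp
  next
    case False
    then have "i = (i - 1) + 1" "1 \<le> i - 1" using that by auto
    then show ?thesis using \<open>\<not> (\<exists>k. 1 \<le> k \<and> \<beta> (k + 1) = 0)\<close> by metis
  qed
  define N where "N = Suc CARD('n)"
  have ON: "ON N" unfolding N_def by (rule ON_upto) (use nz in auto)
  have injq: "inj_on q {1..N}"
  proof (rule inj_onI)
    fix i l assume "i \<in> {1..N}" "l \<in> {1..N}" "q i = q l"
    then have "q i \<bullet> q l = q i \<bullet> q i" by simp
    moreover have "q i \<bullet> q i = 1" using ON_inner[OF ON, of i i] \<open>i \<in> {1..N}\<close> by simp
    moreover have "i \<noteq> l \<Longrightarrow> q i \<bullet> q l = 0" using ON_inner[OF ON, of i l] \<open>i \<in> {1..N}\<close> \<open>l \<in> {1..N}\<close> by simp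
    ultimately show "i = l" by force
  qed
  have "pairwise orthogonal (q ` {1..N})"
    unfolding pairwise_def orthogonal_def using ON_inner[OF ON] by auto
  moreover have "0 \<notin> q ` {1..N}"
  proof
    assume "0 \<in> q ` {1..N}"
    then obtain i where "i \<in> {1..N}" "q i = 0" by auto
    then show False using ON_inner[OF ON, of i i] by simp
  qed
  ultimately have "independent (q ` {1..N})" by (rule pairwise_orthogonal_independent)
  then have "card (q ` {1..N}) \<le> DIM(real^'n)" using independent_bound by blast
  then have "N \<le> CARD('n)" using card_image[OF injq] by simp
  then show False unfolding N_def by simp
qed

lemma kmax_props:
  defines "k \<equiv> kmax M r"
  shows "1 \<le> k" "\<beta> (k + 1) = 0" "\<And>i. 1 \<le> i \<Longrightarrow> i \<le> k \<Longrightarrow> \<beta> i \<noteq> 0" "ON k"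
proof -
  obtain k0 where k0: "1 \<le> k0 \<and> \<beta> (k0 + 1) = 0" using beta_zero_ex by blast
  show k1: "1 \<le> k" and bk: "\<beta> (k + 1) = 0"
    unfolding k_def kmax_def using LeastI[of "\<lambda>k. 1 \<le> k \<and> \<beta> (k + 1) = 0", OF k0] by auto
  show nz: "\<beta> i \<noteq> 0" if "1 \<le> i" "i \<le> k" for i
  proof (cases "i = 1")
    case True then show ?thesis using beta1 rnz by simp
  next
    case False
    define i' where "i' = i - 1"
    have i': "i = i' + 1" "1 \<le> i'" "i' < k" using that False unfolding i'_def by auto
    have "\<not> (1 \<le> i' \<and> \<beta> (i' + 1) = 0)"
      using not_less_Least[of i' "\<lambda>k. 1 \<le> k \<and> \<beta> (k + 1) = 0"] i'(3) unfolding k_def kmax_def by blast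
    then show ?thesis using i' by simp
  qed
  obtain k' where "k = Suc k'" using k1 by (cases k) auto
  then show "ON k" using ON_upto[of k'] nz by simp
qed

lemma M_q_span:
  assumes "1 \<le> k" "\<beta> (k + 1) = 0" "j \<in> {1..k}"
  shows "M *v q j \<in> span (q ` {1..k})"
proof -
  obtain j' where j': "j = Suc j'" using assms(3) by (cases j) auto
  have e: "M *v q j = \<beta> (Suc (Suc j')) *\<^sub>R q (Suc (Suc j')) + (q (Suc j') \<bullet> (M *v q (Suc j'))) *\<^sub>R q (Suc j')
      + \<beta> (Suc j') *\<^sub>R q j'" using lz_rec[of j'] j' by simp
  have t1: "\<beta> (Suc (Suc j')) *\<^sub>R q (Suc (Suc j')) \<in> span (q ` {1..k})"
  proof (cases "Suc j' = k")
    case True then show ?thesis using assms(2) by (simp add: span_zero)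
  next
    case False then have "Suc (Suc j') \<in> {1..k}" using assms(3) j' by auto
    then show ?thesis by (intro span_scale span_base) auto
  qed
  have t2: "(q (Suc j') \<bullet> (M *v q (Suc j'))) *\<^sub>R q (Suc j') \<in> span (q ` {1..k})"
    using assms(3) j' by (intro span_scale span_base) auto
  have t3: "\<beta> (Suc j') *\<^sub>R q j' \<in> span (q ` {1..k})"
  proof (cases j')
    case 0 then show ?thesis by (simp add: q0 span_zero)
  next
    case (Suc j'') then have "j' \<in> {1..k}" using assms(3) j' by auto
    then show ?thesis by (intro span_scale span_base) auto
  qed
  show ?thesis unfolding e using t1 t2 t3 by (intro span_add) auto
qed

lemma M_span_inv:
  assumes "1 \<le> k" "\<beta> (k + 1) = 0" "v \<in> span (q ` {1..k})"
  shows "M *v v \<in> span (q ` {1..k})"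
proof -
  have "M *v v \<in> (\<lambda>x. M *v x) ` span (q ` {1..k})" using assms(3) by blast
  also have "\<dots> = span ((\<lambda>x. M *v x) ` (q ` {1..k}))"
    by (simp add: span_linear_image[OF matrix_vector_mul_linear])
  also have "\<dots> \<subseteq> span (q ` {1..k})"
    by (rule span_minimal) (use M_q_span[OF assms(1,2)] in \<open>auto\<close>)
  finally show ?thesis .
qed

end



locale optc =
  fixes M :: "real^'n^'n" and bb :: "real^'n" and S :: "(real^'n) set" and \<gamma> :: real
  assumes subS: "subspace S"
    and MS: "\<And>x. x \<in> S \<Longrightarrow> M *v x \<in> S"
    and symS: "\<And>x y. x \<in> S \<Longrightarrow> y \<in> S \<Longrightarrow> x \<bullet> (M *v y) = y \<bullet> (M *v x)"
    and bbS: "bb \<in> S" and bbnz: "bb \<noteq> 0" and gpos: "0 < \<gamma>"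
begin

definition qf :: "real^'n \<Rightarrow> real" where "qf u = u \<bullet> (M *v u) + 2 * (bb \<bullet> u)"

definition LGf :: "real \<Rightarrow> real^'n \<Rightarrow> bool" where
  "LGf mu u \<longleftrightarrow> u \<in> S \<and> M *v u - mu *\<^sub>R u = - bb \<and> norm u = \<gamma>"

definition QEPf :: "real \<Rightarrow> real^'n \<Rightarrow> bool" where
  "QEPf mu z \<longleftrightarrow> z \<in> S \<and> z \<noteq> 0 \<and>
     M *v (M *v z - mu *\<^sub>R z) - mu *\<^sub>R (M *v z - mu *\<^sub>R z) = (1 / \<gamma>^2) *\<^sub>R ((bb \<bullet> z) *\<^sub>R bb)"

definition Hard :: bool where
  "Hard \<longleftrightarrow> (\<exists>mu z. QEPf mu z \<and> (\<forall>mu' z'. QEPf mu' z' \<longrightarrow> mu \<le> mu') \<and> bb \<bullet> z = 0)"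

lemma S_diff: "x \<in> S \<Longrightarrow> y \<in> S \<Longrightarrow> x - y \<in> S" using subS subspace_diff by blast
lemma S_add: "x \<in> S \<Longrightarrow> y \<in> S \<Longrightarrow> x + y \<in> S" using subS subspace_add by blast
lemma S_scale: "x \<in> S \<Longrightarrow> c *\<^sub>R x \<in> S" using subS subspace_scale by blast
lemma S_0: "0 \<in> S" using subS subspace_0 by blast

lemma B_S: "x \<in> S \<Longrightarrow> M *v x - c *\<^sub>R x \<in> S" by (simp add: MS S_diff S_scale)

lemma symB: "x \<in> S \<Longrightarrow> y \<in> S \<Longrightarrow> x \<bullet> (M *v y - c *\<^sub>R y) = y \<bullet> (M *v x - c *\<^sub>R x)"
  using symS by (simp add: inner_diff_right inner_commute)

lemma ident:
  assumes uS: "u \<in> S" and wS: "w \<in> S" and lg: "M *v u - mu *\<^sub>R u = - bb" and nw: "norm w = norm u"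
  shows "qf w - qf u = (w - u) \<bullet> (M *v (w - u)) - mu * ((w - u) \<bullet> (w - u))"
proof -
  have bbe: "bb = mu *\<^sub>R u - M *v u" using lg by (simp add: algebra_simps)
  have ww: "w \<bullet> w = u \<bullet> u" using nw by (simp add: dot_square_norm)
  have s: "u \<bullet> (M *v w) = w \<bullet> (M *v u)" using symS[OF uS wS] .
  have b1: "bb \<bullet> w = mu * (u \<bullet> w) - w \<bullet> (M *v u)" unfolding bbe by (simp add: inner_diff_left inner_commute[of u w] inner_commute[of "M *v u" w])
  have b2: "bb \<bullet> u = mu * (u \<bullet> u) - u \<bullet> (M *v u)" unfolding bbe by (simp add: inner_diff_left inner_commute[of "M *v u" u])
  show ?thesis unfolding qf_def b1 b2
    by (simp add: inner_diff_left inner_diff_right matrix_vector_mult_diff_distrib s ww inner_commute algebra_simps)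
qed

lemma norm_eq_gamma: "x \<bullet> x = \<gamma>^2 \<Longrightarrow> norm x = \<gamma>"
  using gpos by (metis norm_ge_zero power2_eq_imp_eq power2_norm_eq_inner less_le)

definition Sig where "Sig = {u. u \<in> S \<and> norm u = \<gamma>}"

lemma Sig_compact: "compact Sig"
proof -
  have "Sig = S \<inter> sphere 0 \<gamma>" unfolding Sig_def by auto
  then show ?thesis using closed_subspace[OF subS] compact_sphere by (simp add: closed_Int_compact)
qed

lemma Sig_ne: "Sig \<noteq> {}"
proof -
  have "(\<gamma> / norm bb) *\<^sub>R bb \<in> Sig" unfolding Sig_def using bbS bbnz gpos by (simp add: S_scale)
  then show ?thesis by blast
qed

lemma exists_min: "\<exists>u\<in>Sig. \<forall>w\<in>Sig. qf u \<le> qf w"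
  by (rule continuous_attains_inf[OF Sig_compact Sig_ne]) (unfold qf_def, intro continuous_intros)


lemma uu_gamma: "u \<in> Sig \<Longrightarrow> u \<bullet> u = \<gamma>^2"
  unfolding Sig_def by (simp add: power2_norm_eq_inner[symmetric])

lemma in_Sig: "w \<in> S \<Longrightarrow> w \<bullet> w = \<gamma>^2 \<Longrightarrow> w \<in> Sig"
  unfolding Sig_def using norm_eq_gamma by blast

lemma first_order:
  assumes uSig: "u \<in> Sig" and min: "\<forall>w\<in>Sig. qf u \<le> qf w"
  shows "M *v u + bb = (((M *v u + bb) \<bullet> u) / \<gamma>^2) *\<^sub>R u"
proof (rule ccontr)
  define g where "g = M *v u + bb"
  define mu where "mu = (g \<bullet> u) / \<gamma>^2"
  define h where "h = g - mu *\<^sub>R u"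
  assume "\<not> ?thesis"
  then have hnz: "h \<noteq> 0" unfolding h_def g_def mu_def by simp
  have uS: "u \<in> S" using uSig Sig_def by auto
  have uu: "u \<bullet> u = \<gamma>^2" using uu_gamma[OF uSig] .
  have hS: "h \<in> S" unfolding h_def g_def using uS by (simp add: S_add S_diff S_scale MS bbS)
  have hu: "h \<bullet> u = 0" unfolding h_def mu_def using uu gpos by (simp add: inner_diff_left)
  define z where "z = (\<gamma> / norm h) *\<^sub>R h"
  have zS: "z \<in> S" unfolding z_def using hS S_scale by blast
  have zu: "z \<bullet> u = 0" unfolding z_def using hu by simp
  have zz: "z \<bullet> z = \<gamma>^2" unfolding z_def using hnz
    by (simp add: power2_norm_eq_inner[symmetric] power_divide)
  define a where "a = (\<lambda>t::real. (1 - t^2) / (1 + t^2))"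
  define b where "b = (\<lambda>t::real. 2 * t / (1 + t^2))"
  define m11 where "m11 = u \<bullet> (M *v u)"
  define m12 where "m12 = z \<bullet> (M *v u)"
  define m22 where "m22 = z \<bullet> (M *v z)"
  define c1 where "c1 = bb \<bullet> u"
  define c2 where "c2 = bb \<bullet> z"
  define \<psi> where "\<psi> = (\<lambda>t. (a t)^2 * m11 + 2 * a t * b t * m12 + (b t)^2 * m22 + 2 * a t * c1 + 2 * b t * c2)"
  have ab: "(a t)^2 + (b t)^2 = 1" for t
  proof -
    have nz: "(1 + t^2)^2 \<noteq> 0" by (metis add_pos_nonneg zero_less_one zero_le_power2 less_irrefl power_not_zero)
    have "(a t)^2 + (b t)^2 = ((1 - t^2)^2 + (2*t)^2) / (1+t^2)^2"
      by (simp add: a_def b_def power_divide add_divide_distrib)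
    also have "(1 - t^2)^2 + (2*t)^2 = (1+t^2)^2" by (simp add: power2_eq_square algebra_simps)
    finally show ?thesis using nz by simp
  qed
  have wSig: "a t *\<^sub>R u + b t *\<^sub>R z \<in> Sig" for t
  proof (rule in_Sig)
    show "a t *\<^sub>R u + b t *\<^sub>R z \<in> S" using uS zS by (simp add: S_add S_scale)
    have "(a t *\<^sub>R u + b t *\<^sub>R z) \<bullet> (a t *\<^sub>R u + b t *\<^sub>R z) = ((a t)^2 + (b t)^2) * \<gamma>^2"
      using uu zz zu by (simp add: inner_add_left inner_add_right inner_commute[of u z] power2_eq_square algebra_simps)
    then show "(a t *\<^sub>R u + b t *\<^sub>R z) \<bullet> (a t *\<^sub>R u + b t *\<^sub>R z) = \<gamma>^2" using ab by simp
  qed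
  have symuz: "u \<bullet> (M *v z) = z \<bullet> (M *v u)" using symS[OF uS zS] .
  have qfw: "qf (a t *\<^sub>R u + b t *\<^sub>R z) = \<psi> t" for t
    unfolding qf_def \<psi>_def m11_def m12_def m22_def c1_def c2_def
    by (simp add: inner_add_left inner_add_right matrix_vector_right_distrib matrix_vector_mult_scaleR symuz power2_eq_square algebra_simps)
  have psi0: "\<psi> 0 = qf u" unfolding \<psi>_def a_def b_def qf_def m11_def c1_def by simp
  have loc: "\<forall>y. \<bar>0 - y\<bar> < 1 \<longrightarrow> \<psi> 0 \<le> \<psi> y"
    using min wSig qfw psi0 by metis
  have der: "(\<psi> has_real_derivative (4 * m12 + 4 * c2)) (at 0)"
    unfolding \<psi>_def a_def b_def
    by (auto intro!: derivative_eq_intros)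
  have "4 * m12 + 4 * c2 = 0" by (rule DERIV_local_min[OF der _ loc]) simp
  then have "z \<bullet> g = 0" unfolding g_def m12_def c2_def by (simp add: inner_add_right inner_commute)
  then have "h \<bullet> g = 0" unfolding z_def using hnz gpos by simp
  then have "h \<bullet> h = 0" using hu unfolding h_def by (simp add: inner_diff_left inner_diff_right inner_commute)
  then show False using hnz by simp
qed

lemma chord:
  assumes uSig: "u \<in> Sig" and min: "\<forall>w\<in>Sig. qf u \<le> qf w" and lg: "M *v u - mu *\<^sub>R u = - bb"
    and yS: "y \<in> S" and yu: "y \<bullet> u \<noteq> 0"
  shows "0 \<le> y \<bullet> (M *v y) - mu * (y \<bullet> y)"
proof -
  have uS: "u \<in> S" using uSig Sig_def by auto
  have ynz: "y \<bullet> y \<noteq> 0" using yu by auto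
  define s where "s = - 2 * (u \<bullet> y) / (y \<bullet> y)"
  have snz: "s \<noteq> 0" unfolding s_def using yu ynz by (simp add: inner_commute)
  have sy: "s * (y \<bullet> y) = - 2 * (u \<bullet> y)" unfolding s_def using ynz by simp
  define w where "w = u + s *\<^sub>R y"
  have wS: "w \<in> S" unfolding w_def using uS yS by (simp add: S_add S_scale)
  have "w \<bullet> w = u \<bullet> u + s * (2 * (u \<bullet> y) + s * (y \<bullet> y))"
    unfolding w_def by (simp add: inner_add_left inner_add_right inner_commute[of y u] algebra_simps power2_eq_square)
  also have "\<dots> = u \<bullet> u" using sy by simp
  finally have ww: "w \<bullet> w = u \<bullet> u" .
  then have wSig: "w \<in> Sig" using in_Sig[OF wS] uu_gamma[OF uSig] by simp
  have nw: "norm w = norm u" using ww by (simp add: norm_eq_sqrt_inner)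
  have "0 \<le> qf w - qf u" using min wSig by auto
  also have "qf w - qf u = (w - u) \<bullet> (M *v (w - u)) - mu * ((w - u) \<bullet> (w - u))"
    by (rule ident[OF uS wS lg nw])
  also have "\<dots> = s^2 * (y \<bullet> (M *v y) - mu * (y \<bullet> y))"
    unfolding w_def by (simp add: matrix_vector_mult_scaleR power2_eq_square algebra_simps)
  finally have "0 \<le> s^2 * (y \<bullet> (M *v y) - mu * (y \<bullet> y))" .
  moreover have "0 < s^2" using snz by simp
  ultimately show ?thesis by (simp add: zero_le_mult_iff)
qed

lemma second_order:
  assumes uSig: "u \<in> Sig" and min: "\<forall>w\<in>Sig. qf u \<le> qf w" and lg: "M *v u - mu *\<^sub>R u = - bb"
    and yS: "y \<in> S"
  shows "0 \<le> y \<bullet> (M *v y) - mu * (y \<bullet> y)"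
proof (cases "y \<bullet> u = 0")
  case False then show ?thesis using chord[OF assms] by simp
next
  case True
  have uS: "u \<in> S" using uSig Sig_def by auto
  have uu: "u \<bullet> u = \<gamma>^2" using uu_gamma[OF uSig] .
  define F where "F = (\<lambda>e::real. (y + e *\<^sub>R u) \<bullet> (M *v y + e *\<^sub>R (M *v u)) - mu * ((y + e *\<^sub>R u) \<bullet> (y + e *\<^sub>R u)))"
  have Fpos: "0 \<le> F e" if "e \<noteq> 0" for e
  proof -
    have "(y + e *\<^sub>R u) \<bullet> u = e * \<gamma>^2" using True uu by (simp add: inner_add_left)
    then have "(y + e *\<^sub>R u) \<bullet> u \<noteq> 0" using that gpos by simp
    moreover have "y + e *\<^sub>R u \<in> S" using yS uS by (simp add: S_add S_scale)
    ultimately have "0 \<le> (y + e *\<^sub>R u) \<bullet> (M *v (y + e *\<^sub>R u)) - mu * ((y + e *\<^sub>R u) \<bullet> (y + e *\<^sub>R u))"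
      using chord[OF uSig min lg] by blast
    then show ?thesis unfolding F_def
      by (simp add: matrix_vector_right_distrib matrix_vector_mult_scaleR)
  qed
  have "isCont F 0"
    unfolding F_def by (intro continuous_intros)
  then have lim: "(F \<longlongrightarrow> F 0) (at 0)" by (simp add: isCont_def)
  have ev: "eventually (\<lambda>e. 0 \<le> F e) (at 0)"
    unfolding eventually_at_filter using Fpos by (simp add: always_eventually)
  have "0 \<le> F 0" by (rule tendsto_lowerbound[OF lim ev trivial_limit_at])
  then show ?thesis unfolding F_def by simp
qed


lemma global_data:
  "\<exists>mu u. u \<in> Sig \<and> (\<forall>w\<in>Sig. qf u \<le> qf w) \<and> M *v u - mu *\<^sub>R u = - bb
     \<and> (\<forall>y\<in>S. 0 \<le> y \<bullet> (M *v y) - mu * (y \<bullet> y))"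
proof -
  obtain u where uSig: "u \<in> Sig" and min: "\<forall>w\<in>Sig. qf u \<le> qf w" using exists_min by blast
  define mu where "mu = ((M *v u + bb) \<bullet> u) / \<gamma>^2"
  have "M *v u + bb = mu *\<^sub>R u" unfolding mu_def by (rule first_order[OF uSig min])
  then have lg: "M *v u - mu *\<^sub>R u = - bb" by (simp add: algebra_simps)
  show ?thesis using uSig min lg second_order[OF uSig min lg] by blast
qed

lemma LG_min:
  assumes uSig: "u \<in> Sig" and min: "\<forall>w\<in>Sig. qf u \<le> qf w" and lg: "M *v u - mu *\<^sub>R u = - bb"
    and psd: "\<forall>y\<in>S. 0 \<le> y \<bullet> (M *v y) - mu * (y \<bullet> y)"
    and lg': "LGf mu' u'"
  shows "mu \<le> mu'"
proof (rule ccontr)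
  assume "\<not> mu \<le> mu'"
  then have lt: "mu' < mu" by simp
  have uS: "u \<in> S" using uSig Sig_def by auto
  have u'S: "u' \<in> S" and lgu': "M *v u' - mu' *\<^sub>R u' = - bb" and nu': "norm u' = \<gamma>"
    using lg' unfolding LGf_def by auto
  have u'Sig: "u' \<in> Sig" using u'S nu' Sig_def by auto
  have nu: "norm u = norm u'" using uSig nu' Sig_def by auto
  define d where "d = u - u'"
  have dS: "d \<in> S" unfolding d_def using uS u'S S_diff by blast
  have "qf u - qf u' = d \<bullet> (M *v d) - mu' * (d \<bullet> d)"
    unfolding d_def by (rule ident[OF u'S uS lgu' nu])
  also have "\<dots> = (d \<bullet> (M *v d) - mu * (d \<bullet> d)) + (mu - mu') * (d \<bullet> d)" by (simp add: algebra_simps)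
  finally have e: "qf u - qf u' = (d \<bullet> (M *v d) - mu * (d \<bullet> d)) + (mu - mu') * (d \<bullet> d)" .
  have "qf u \<le> qf u'" using min u'Sig by auto
  then have "(mu - mu') * (d \<bullet> d) \<le> 0" using e psd dS by fastforce
  then have "d \<bullet> d \<le> 0" using lt by (simp add: mult_le_0_iff)
  then have "d \<bullet> d = 0" using inner_ge_zero[of d] by linarith
  then have "d = 0" by simp
  then have "u = u'" unfolding d_def by simp
  then have "(mu - mu') *\<^sub>R u = 0" using lg lgu' by (simp add: algebra_simps)
  then have "u = 0" using lt by simp
  then show False using uSig gpos Sig_def by auto
qed

lemma psd_zero:
  assumes psd: "\<forall>y\<in>S. 0 \<le> y \<bullet> (M *v y) - mu * (y \<bullet> y)"
    and yS: "y \<in> S" and y0: "y \<bullet> (M *v y) - mu * (y \<bullet> y) = 0"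
  shows "M *v y - mu *\<^sub>R y = 0"
proof (rule ccontr)
  define w where "w = M *v y - mu *\<^sub>R y"
  assume "\<not> ?thesis"
  then have wnz: "w \<noteq> 0" unfolding w_def .
  have wS: "w \<in> S" unfolding w_def using B_S[OF yS] .
  define n where "n = w \<bullet> w"
  have npos: "0 < n" unfolding n_def using wnz by simp
  define Qw where "Qw = w \<bullet> (M *v w) - mu * (w \<bullet> w)"
  define K where "K = \<bar>Qw\<bar> + 1"
  have Kpos: "0 < K" unfolding K_def by simp
  define t where "t = - n / K"
  have ytS: "y + t *\<^sub>R w \<in> S" using yS wS by (simp add: S_add S_scale)
  have sy: "y \<bullet> (M *v w) = w \<bullet> (M *v y)" using symS[OF yS wS] .
  have wy: "w \<bullet> (M *v y) - mu * (w \<bullet> y) = n" unfolding n_def w_def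
    by (simp add: inner_diff_right)
  have "(y + t *\<^sub>R w) \<bullet> (M *v (y + t *\<^sub>R w)) - mu * ((y + t *\<^sub>R w) \<bullet> (y + t *\<^sub>R w))
      = (y \<bullet> (M *v y) - mu * (y \<bullet> y)) + 2 * t * (w \<bullet> (M *v y) - mu * (w \<bullet> y)) + t^2 * Qw"
    unfolding Qw_def
    by (simp add: inner_add_left inner_add_right matrix_vector_right_distrib matrix_vector_mult_scaleR sy
        inner_commute[of y w] power2_eq_square algebra_simps)
  also have "\<dots> = 2 * t * n + t^2 * Qw" using y0 wy by simp
  also have "\<dots> = n^2 * (Qw - 2 * K) / K^2" unfolding t_def using Kpos
    by (simp add: field_simps power2_eq_square)
  also have "\<dots> < 0"
  proof -
    have "Qw - 2 * K < 0" unfolding K_def by (cases "Qw \<ge> 0") auto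
    moreover have "0 < n^2" using npos by simp
    ultimately have "n^2 * (Qw - 2 * K) < 0" by (simp add: mult_pos_neg)
    then show ?thesis using Kpos by (simp add: divide_neg_pos)
  qed
  finally show False using psd ytS by fastforce
qed

lemma PD:
  assumes uSig: "u \<in> Sig" and min: "\<forall>w\<in>Sig. qf u \<le> qf w" and lg: "M *v u - mu *\<^sub>R u = - bb"
    and psd: "\<forall>y\<in>S. 0 \<le> y \<bullet> (M *v y) - mu * (y \<bullet> y)"
    and easy: "\<not> Hard"
  shows "\<forall>y\<in>S. y \<noteq> 0 \<longrightarrow> 0 < y \<bullet> (M *v y) - mu * (y \<bullet> y)"
proof (rule ccontr)
  assume "\<not> ?thesis"
  then obtain y where yS: "y \<in> S" and ynz: "y \<noteq> 0" and le: "y \<bullet> (M *v y) - mu * (y \<bullet> y) \<le> 0" by force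
  have uS: "u \<in> S" using uSig Sig_def by auto
  have y0: "y \<bullet> (M *v y) - mu * (y \<bullet> y) = 0" using le psd yS by force
  have By: "M *v y - mu *\<^sub>R y = 0" by (rule psd_zero[OF psd yS y0])
  have bby: "bb \<bullet> y = 0"
  proof -
    have "bb \<bullet> y = - (y \<bullet> (M *v u - mu *\<^sub>R u))" using lg by (simp add: inner_commute)
    also have "y \<bullet> (M *v u - mu *\<^sub>R u) = u \<bullet> (M *v y - mu *\<^sub>R y)" by (rule symB[OF yS uS])
    finally show ?thesis using By by simp
  qed
  have qy: "QEPf mu y" unfolding QEPf_def using yS ynz By bby by simp
  have minq: "mu \<le> mu'" if q': "QEPf mu' z'" for mu' z'
  proof (rule ccontr)
    assume "\<not> mu \<le> mu'"
    then have lt: "mu' < mu" by simp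
    have z'S: "z' \<in> S" and z'nz: "z' \<noteq> 0"
      and eq: "M *v (M *v z' - mu' *\<^sub>R z') - mu' *\<^sub>R (M *v z' - mu' *\<^sub>R z') = (1 / \<gamma>^2) *\<^sub>R ((bb \<bullet> z') *\<^sub>R bb)"
      using q' unfolding QEPf_def by auto
    define v where "v = M *v z' - mu' *\<^sub>R z'"
    have vS: "v \<in> S" unfolding v_def using B_S[OF z'S] .
    have PD': "0 < x \<bullet> (M *v x) - mu' * (x \<bullet> x)" if "x \<in> S" "x \<noteq> 0" for x
    proof -
      have "0 \<le> x \<bullet> (M *v x) - mu * (x \<bullet> x)" using psd that by blast
      moreover have "0 < (mu - mu') * (x \<bullet> x)" using lt that by simp
      ultimately show ?thesis by (simp add: algebra_simps)
    qed
    have vv: "v \<bullet> v = z' \<bullet> (M *v v - mu' *\<^sub>R v)"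
      using symB[OF z'S vS, of mu'] unfolding v_def[symmetric] by simp
    show False
    proof (cases "bb \<bullet> z' = 0")
      case True
      then have "M *v v - mu' *\<^sub>R v = 0" using eq unfolding v_def by simp
      then have "v \<bullet> v = 0" using vv by simp
      then have "v = 0" by simp
      then have "z' \<bullet> (M *v z') - mu' * (z' \<bullet> z') = 0" unfolding v_def by (simp add: inner_diff_right)
      then show False using PD'[OF z'S z'nz] by simp
    next
      case False
      define c where "c = bb \<bullet> z'"
      have cnz: "c \<noteq> 0" using False c_def by simp
      define u' where "u' = (- (\<gamma>^2 / c)) *\<^sub>R v"
      have u'S: "u' \<in> S" unfolding u'_def using vS S_scale by blast
      have Bv: "M *v v - mu' *\<^sub>R v = (c / \<gamma>^2) *\<^sub>R bb" using eq unfolding v_def c_def by simp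
      have lgu: "M *v u' - mu' *\<^sub>R u' = - bb"
      proof -
        have "M *v u' - mu' *\<^sub>R u' = (- (\<gamma>^2 / c)) *\<^sub>R (M *v v - mu' *\<^sub>R v)"
          unfolding u'_def matrix_vector_mult_scaleR by (simp add: algebra_simps)
        also have "\<dots> = - bb" unfolding Bv using cnz gpos by simp
        finally show ?thesis .
      qed
      have "u' \<bullet> u' = (\<gamma>^2 / c)^2 * (v \<bullet> v)" unfolding u'_def by (simp add: power2_eq_square)
      also have "v \<bullet> v = (c / \<gamma>^2) * c" unfolding vv Bv c_def by (simp add: inner_commute)
      finally have "u' \<bullet> u' = \<gamma>^2" using cnz gpos by (simp add: field_simps power2_eq_square)
      then have "LGf mu' u'" unfolding LGf_def using u'S lgu norm_eq_gamma by blast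
      then have "mu \<le> mu'" using LG_min[OF uSig min lg psd] by blast
      then show False using lt by simp
    qed
  qed
  have "Hard" unfolding Hard_def using qy minq bby by blast
  then show False using easy by simp
qed

lemma opt_main:
  assumes easy: "\<not> Hard"
  shows "\<exists>mu u. LGf mu u \<and> (\<forall>w\<in>Sig. qf u \<le> qf w) \<and> (\<forall>w\<in>Sig. qf w \<le> qf u \<longrightarrow> w = u)
     \<and> (\<forall>mu' u'. LGf mu' u' \<longrightarrow> mu \<le> mu')
     \<and> (\<forall>y\<in>S. y \<noteq> 0 \<longrightarrow> 0 < y \<bullet> (M *v y) - mu * (y \<bullet> y))"
proof -
  obtain mu u where uSig: "u \<in> Sig" and min: "\<forall>w\<in>Sig. qf u \<le> qf w" and lg: "M *v u - mu *\<^sub>R u = - bb"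
    and psd: "\<forall>y\<in>S. 0 \<le> y \<bullet> (M *v y) - mu * (y \<bullet> y)" using global_data by blast
  have pd: "\<forall>y\<in>S. y \<noteq> 0 \<longrightarrow> 0 < y \<bullet> (M *v y) - mu * (y \<bullet> y)" by (rule PD[OF uSig min lg psd easy])
  have uS: "u \<in> S" using uSig Sig_def by auto
  have LGu: "LGf mu u" unfolding LGf_def using uSig lg Sig_def by auto
  have uniq: "w = u" if wSig: "w \<in> Sig" and le: "qf w \<le> qf u" for w
  proof (rule ccontr)
    assume "w \<noteq> u"
    have wS: "w \<in> S" using wSig Sig_def by auto
    have nw: "norm w = norm u" using wSig uSig Sig_def by auto
    have "qf w - qf u = (w - u) \<bullet> (M *v (w - u)) - mu * ((w - u) \<bullet> (w - u))" by (rule ident[OF uS wS lg nw])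
    moreover have "0 < (w - u) \<bullet> (M *v (w - u)) - mu * ((w - u) \<bullet> (w - u))"
      using pd S_diff[OF wS uS] \<open>w \<noteq> u\<close> by simp
    ultimately show False using le by simp
  qed
  show ?thesis using LGu min uniq LG_min[OF uSig min lg psd] pd by blast
qed

lemma LG_unique:
  assumes pd: "\<forall>y\<in>S. y \<noteq> 0 \<longrightarrow> 0 < y \<bullet> (M *v y) - mu * (y \<bullet> y)"
    and uS: "u \<in> S" and vS: "v \<in> S" and lu: "M *v u - mu *\<^sub>R u = - bb" and lv: "M *v v - mu *\<^sub>R v = - bb"
  shows "u = v"
proof (rule ccontr)
  assume "u \<noteq> v"
  have "M *v (u - v) - mu *\<^sub>R (u - v) = (M *v u - mu *\<^sub>R u) - (M *v v - mu *\<^sub>R v)"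
    by (simp add: matrix_vector_mult_diff_distrib algebra_simps)
  then have "M *v (u - v) - mu *\<^sub>R (u - v) = 0" using lu lv by simp
  then have "(u - v) \<bullet> (M *v (u - v)) - mu * ((u - v) \<bullet> (u - v)) = 0"
    by (metis inner_diff_right inner_scaleR_right inner_zero_right)
  then show False using pd S_diff[OF uS vS] \<open>u \<noteq> v\<close> by force
qed

end

lemma mv_sum: "finite I \<Longrightarrow> (M::real^'n^'n) *v (\<Sum>j\<in>I. c j *\<^sub>R v j) = (\<Sum>j\<in>I. c j *\<^sub>R (M *v v j))"
  by (induction rule: finite_induct) (auto simp: matrix_vector_right_distrib matrix_vector_mult_scaleR)

lemma Tk_sum: "(\<Sum>j\<in>{1..k}. Tk M r i j * x j) = lz_q M r i \<bullet> (M *v Qmul M r k x)"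
  unfolding Tk_def Qmul_def by (simp add: mv_sum inner_sum_right mult.commute)

lemma subspace_ker: "subspace {u::real^'n. transpose (C::real^'m^'n) *v u = 0}"
  by (auto simp: subspace_def matrix_vector_right_distrib matrix_vector_mult_scaleR)

theorem corollary3p1:
  fixes A :: "real^'n^'n" and C :: "real^'m^'n" and b :: "real^'m"
  assumes symA: "transpose A = A"
    and mn: "CARD('m) < CARD('n)"
    and rankC: "rank C = CARD('m)"
    and n0_small: "norm (n0 C b) < 1"
    and b0_nz: "b0 A C b \<noteq> 0"
    and easy: "QEP_easy_case A C b"
  shows "(\<exists>\<mu> x. rLG_minimizer (Mmat A C) (b0 A C b) (gam C b) (kmax (Mmat A C) (b0 A C b)) \<mu> x)
    \<and> (\<forall>\<mu> x. rLG_minimizer (Mmat A C) (b0 A C b) (gam C b) (kmax (Mmat A C) (b0 A C b)) \<mu> x \<longrightarrow>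
         (let u = Qmul (Mmat A C) (b0 A C b) (kmax (Mmat A C) (b0 A C b)) x in
            LG_solution A C b \<mu> u \<and>
            CRQ_minimizer A C b (u + n0 C b) \<and>
            (\<forall>v. CRQ_minimizer A C b v \<longrightarrow> v = u + n0 C b)))"
proof -
  let ?M = "Mmat A C" and ?r = "b0 A C b" and ?S = "{u::real^'n. transpose C *v u = 0}" and ?g = "gam C b"
  let ?n0 = "n0 C b"
  have n0sq: "(norm ?n0)^2 < 1"
    using power_strict_mono[OF n0_small norm_ge_zero, of 2] by simp
  have gsq: "?g^2 = 1 - (norm ?n0)^2" unfolding gam_def using n0sq by simp
  have gpos: "0 < ?g" unfolding gam_def using n0sq by simp
  have MS: "\<And>x. x \<in> ?S \<Longrightarrow> ?M *v x \<in> ?S" using M_S[OF rankC] by simp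
  have symS: "\<And>x y. x \<in> ?S \<Longrightarrow> y \<in> ?S \<Longrightarrow> x \<bullet> (?M *v y) = y \<bullet> (?M *v x)"
    using M_sym_S[OF symA] by simp
  have rS: "?r \<in> ?S" using b0_S[OF rankC] by simp
  interpret lz: lzc ?M ?r ?S
    by unfold_locales (use subspace_ker MS symS rS b0_nz in auto)
  interpret op: optc ?M ?r ?S ?g
    by unfold_locales (use subspace_ker MS symS rS b0_nz gpos in auto)
  have QEPeq: "QEP_feasible A C b mu z \<longleftrightarrow> op.QEPf mu z" for mu z
    unfolding QEP_feasible_def op.QEPf_def
    by (auto simp: Mminus_apply matrix_vector_mul_assoc[symmetric])
  have hardeq: "QEP_hard_case A C b \<longleftrightarrow> op.Hard"
    unfolding QEP_hard_case_def op.Hard_def QEP_minimizer_def QEPeq by blast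
  have LG_feasible_eq: "LG_feasible A C b mu u \<longleftrightarrow> op.LGf mu u" for mu u
    unfolding LG_feasible_def op.LGf_def by (auto simp: Mminus_apply)
  have notHard: "\<not> op.Hard" using easy hardeq unfolding QEP_easy_case_def by blast
  obtain mu u where LGu: "op.LGf mu u" and umin: "\<forall>w\<in>op.Sig. op.qf u \<le> op.qf w"
    and uuniq: "\<forall>w\<in>op.Sig. op.qf w \<le> op.qf u \<longrightarrow> w = u"
    and LGmin: "\<forall>mu' u'. op.LGf mu' u' \<longrightarrow> mu \<le> mu'"
    and pd: "\<forall>y\<in>?S. y \<noteq> 0 \<longrightarrow> 0 < y \<bullet> (?M *v y) - mu * (y \<bullet> y)"
    using op.opt_main[OF notHard] by blast
  have uS: "u \<in> ?S" and lgu: "?M *v u - mu *\<^sub>R u = - ?r" and nu: "norm u = ?g"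
    using LGu unfolding op.LGf_def by auto
  let ?k = "kmax ?M ?r"
  have k1: "1 \<le> ?k" and bk: "lz_beta ?M ?r (?k + 1) = 0" and ON: "lz.ON ?k"
    using lz.kmax_props by auto
  let ?Q = "lz_q ?M ?r"
  let ?K = "span (?Q ` {1..?k})"
  have KS: "?K \<subseteq> ?S" by (rule lz.span_q_S)
  text \<open>u lies in the Krylov space\<close>
  define f where "f = (\<lambda>v::real^'n. ?M *v v - mu *\<^sub>R v)"
  have linf: "linear f" unfolding f_def linear_iff
    by (simp add: matrix_vector_right_distrib matrix_vector_mult_scaleR algebra_simps)
  have injf: "inj_on f ?S"
  proof (rule inj_onI)
    fix x y assume xS: "x \<in> ?S" and yS: "y \<in> ?S" and e: "f x = f y"
    have "?M *v (x - y) - mu *\<^sub>R (x - y) = 0" using e unfolding f_def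
      by (simp add: matrix_vector_mult_diff_distrib algebra_simps)
    then have "(x - y) \<bullet> (?M *v (x - y)) - mu * ((x - y) \<bullet> (x - y)) = 0"
      by (metis inner_diff_right inner_scaleR_right inner_zero_right)
    moreover have "x - y \<in> ?S" using op.S_diff[OF xS yS] .
    ultimately show "x = y" using pd by force
  qed
  have fK: "f ` ?K = ?K"
  proof -
    have fin: "f v \<in> ?K" if "v \<in> ?Q ` {1..?k}" for v
    proof -
      have vK: "v \<in> ?K" using that by (rule span_base)
      have "?M *v v \<in> ?K" by (rule lz.M_span_inv[OF k1 bk vK])
      then show ?thesis unfolding f_def using vK by (intro span_diff span_scale)
    qed
    have sub: "span (f ` (?Q ` {1..?k})) \<subseteq> ?K"
      by (rule span_minimal) (use fin in \<open>auto\<close>)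
    have "dim (f ` (?Q ` {1..?k})) = dim (?Q ` {1..?k})"
      by (rule dim_image_eq[OF linf]) (use injf KS inj_on_subset in blast)
    then have "span (f ` (?Q ` {1..?k})) = ?K"
      using subspace_dim_equal[OF subspace_span subspace_span sub] by (simp add: dim_span)
    then show ?thesis by (simp add: span_linear_image[OF linf])
  qed
  have rK: "- ?r \<in> ?K"
  proof -
    have "?r = norm ?r *\<^sub>R ?Q 1" unfolding lz.q1 using b0_nz by simp
    moreover have "?Q 1 \<in> ?K" using k1 by (intro span_base) auto
    ultimately show ?thesis by (metis span_neg span_scale)
  qed
  then have "- ?r \<in> f ` ?K" unfolding fK .
  then obtain w where wK: "w \<in> ?K" and fw: "- ?r = f w" by (rule imageE)
  have fu: "f u = - ?r" unfolding f_def by (rule lgu)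
  have wS: "w \<in> ?S" by (rule subsetD[OF KS wK])
  have "w = u" using inj_onD[OF injf _ wS uS] fw fu by simp
  then have uK: "u \<in> ?K" using wK by simp
  define xs where "xs = (\<lambda>j. if j \<in> {1..?k} then ?Q j \<bullet> u else 0)"
  have Qxs: "Qmul ?M ?r ?k xs = u"
  proof -
    have "Qmul ?M ?r ?k xs = (\<Sum>j\<in>{1..?k}. (?Q j \<bullet> u) *\<^sub>R ?Q j)"
      unfolding Qmul_def xs_def by (rule sum.cong) auto
    also have "\<dots> = u" using lz.ON_expand[OF ON uK] by simp
    finally show ?thesis .
  qed
  have sqrt_eq: "sqrt s = ?g \<longleftrightarrow> s = ?g^2" for s
  proof
    assume h: "sqrt s = ?g"
    have s0: "0 \<le> s"
    proof (rule ccontr)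
      assume "\<not> 0 \<le> s"
      then have "sqrt s < 0" by simp
      then show False using h gpos by simp
    qed
    show "s = ?g^2" using real_sqrt_pow2[OF s0] h by simp
  next
    assume "s = ?g^2"
    then show "sqrt s = ?g" using gpos by simp
  qed
  have rLG_LG: "op.LGf mu' (Qmul ?M ?r ?k x')" if rf: "rLG_feasible ?M ?r ?g ?k mu' x'" for mu' x'
  proof -
    let ?u = "Qmul ?M ?r ?k x'"
    have uK': "?u \<in> ?K" unfolding Qmul_def by (intro span_sum span_scale span_base) auto
    have eqs: "\<forall>i\<in>{1..?k}. (\<Sum>j\<in>{1..?k}. Tk ?M ?r i j * x' j) - mu' * x' i = - (if i = 1 then norm ?r else 0)"
      and ns: "sqrt (\<Sum>i\<in>{1..?k}. (x' i)^2) = ?g" using rf unfolding rLG_feasible_def by auto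
    have "?M *v ?u - mu' *\<^sub>R ?u = - ?r"
    proof (rule lz.ON_eq[OF ON])
      show "?M *v ?u - mu' *\<^sub>R ?u \<in> ?K" using lz.M_span_inv[OF k1 bk uK'] uK' by (intro span_diff span_scale)
      show "- ?r \<in> ?K" by (rule rK)
      fix i assume i: "i \<in> {1..?k}"
      have "?Q i \<bullet> (?M *v ?u - mu' *\<^sub>R ?u) = (\<Sum>j\<in>{1..?k}. Tk ?M ?r i j * x' j) - mu' * x' i"
        unfolding Tk_sum using lz.ON_coeff[OF ON i, of x'] unfolding Qmul_def by (simp add: inner_diff_right)
      also have "\<dots> = - (if i = 1 then norm ?r else 0)" using eqs i by blast
      also have "\<dots> = ?Q i \<bullet> (- ?r)"
      proof -
        have "?r = norm ?r *\<^sub>R ?Q 1" unfolding lz.q1 using b0_nz by simp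
        then have "?Q i \<bullet> (- ?r) = - (norm ?r * (?Q i \<bullet> ?Q 1))" by (metis inner_minus_right inner_scaleR_right)
        also have "\<dots> = - (if i = 1 then norm ?r else 0)" using lz.ON_inner[OF ON i, of 1] k1 by auto
        finally show ?thesis by simp
      qed
      finally show "?Q i \<bullet> (?M *v ?u - mu' *\<^sub>R ?u) = ?Q i \<bullet> (- ?r)" .
    qed
    moreover have "?u \<in> ?S" using uK' KS by blast
    moreover have "norm ?u = ?g"
    proof -
      have "?u \<bullet> ?u = ?g^2" using lz.ON_normsq[OF ON, of x'] ns sqrt_eq unfolding Qmul_def by simp
      then show ?thesis by (rule op.norm_eq_gamma)
    qed
    ultimately show ?thesis unfolding op.LGf_def by simp
  qed
  have feas: "rLG_feasible ?M ?r ?g ?k mu xs"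
    unfolding rLG_feasible_def
  proof (intro conjI allI ballI impI)
    fix i assume ni: "i \<notin> {1..?k}" show "xs i = 0" unfolding xs_def using ni by (rule if_not_P)
  next
    fix i assume i: "i \<in> {1..?k}"
    have "(\<Sum>j\<in>{1..?k}. Tk ?M ?r i j * xs j) - mu * xs i = ?Q i \<bullet> (?M *v u - mu *\<^sub>R u)"
      unfolding Tk_sum Qxs using i unfolding xs_def by (simp add: inner_diff_right)
    also have "\<dots> = - (norm ?r * (?Q i \<bullet> ?Q 1))"
    proof -
      have "?r = norm ?r *\<^sub>R ?Q 1" unfolding lz.q1 using b0_nz by simp
      then show ?thesis unfolding lgu by (metis inner_minus_right inner_scaleR_right)
    qed
    also have "\<dots> = - (if i = 1 then norm ?r else 0)" using lz.ON_inner[OF ON i, of 1] k1 by auto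
    finally show "(\<Sum>j\<in>{1..?k}. Tk ?M ?r i j * xs j) - mu * xs i = - (if i = 1 then norm ?r else 0)" .
  next
    have "(\<Sum>i\<in>{1..?k}. (xs i)^2) = u \<bullet> u"
      using lz.ON_normsq[OF ON, of xs] Qxs unfolding Qmul_def by simp
    also have "\<dots> = ?g^2" using nu by (simp add: power2_norm_eq_inner[symmetric])
    finally show "sqrt (\<Sum>i\<in>{1..?k}. (xs i)^2) = ?g" using sqrt_eq by blast
  qed
  have rmin: "rLG_minimizer ?M ?r ?g ?k mu xs"
    unfolding rLG_minimizer_def using feas rLG_LG LGmin by blast
  have Avv: "v \<bullet> (A *v v) = op.qf (v - ?n0) + ?n0 \<bullet> (A *v ?n0)" if "transpose C *v v = b" for v
  proof -
    have wS: "transpose C *v (v - ?n0) = 0"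
      using that Ct_n0[OF rankC] by (simp add: matrix_vector_mult_diff_distrib)
    define w where "w = v - ?n0"
    have v: "v = w + ?n0" unfolding w_def by simp
    have wS': "transpose C *v w = 0" using wS unfolding w_def .
    have "v \<bullet> (A *v v) = w \<bullet> (A *v w) + 2 * (w \<bullet> (A *v ?n0)) + ?n0 \<bullet> (A *v ?n0)"
    proof -
      have "?n0 \<bullet> (A *v w) = w \<bullet> (A *v ?n0)" using inner_A[of ?n0 A w] symA by (simp add: inner_commute)
      then show ?thesis unfolding v by (simp add: inner_add_left inner_add_right matrix_vector_right_distrib)
    qed
    also have "w \<bullet> (A *v w) = w \<bullet> (?M *v w)" using M_inner_S[OF wS' wS'] by simp
    also have "w \<bullet> (A *v ?n0) = ?r \<bullet> w" using inner_b0[OF wS'] by (simp add: inner_commute)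
    finally show ?thesis unfolding op.qf_def w_def by simp
  qed
  have feas_Sig: "v - ?n0 \<in> op.Sig" if "CRQ_feasible C b v" for v
  proof -
    have vv: "v \<bullet> v = 1" and cv: "transpose C *v v = b" using that unfolding CRQ_feasible_def by auto
    have wS: "transpose C *v (v - ?n0) = 0"
      using cv Ct_n0[OF rankC] by (simp add: matrix_vector_mult_diff_distrib)
    have o: "(v - ?n0) \<bullet> ?n0 = 0" using S_n0_orth[OF wS] .
    have "v \<bullet> v = (v - ?n0) \<bullet> (v - ?n0) + ?n0 \<bullet> ?n0"
    proof -
      have "v = (v - ?n0) + ?n0" by simp
      then have "v \<bullet> v = ((v - ?n0) + ?n0) \<bullet> ((v - ?n0) + ?n0)" by simp
      also have "\<dots> = (v - ?n0) \<bullet> (v - ?n0) + ?n0 \<bullet> ?n0"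
        using o by (simp only: inner_add_left inner_add_right inner_commute[of ?n0 "v - ?n0"])
      finally show ?thesis .
    qed
    then have "(v - ?n0) \<bullet> (v - ?n0) = ?g^2" using vv gsq by (simp add: power2_norm_eq_inner)
    then show ?thesis using op.in_Sig wS by simp
  qed
  have Sig_feas: "CRQ_feasible C b (w + ?n0)" if "w \<in> op.Sig" for w
  proof -
    have wS: "transpose C *v w = 0" and nw: "norm w = ?g" using that unfolding op.Sig_def by auto
    have o: "w \<bullet> ?n0 = 0" using S_n0_orth[OF wS] .
    have "(w + ?n0) \<bullet> (w + ?n0) = w \<bullet> w + ?n0 \<bullet> ?n0"
      using o by (simp add: inner_add_left inner_add_right inner_commute)
    also have "\<dots> = 1"
    proof -
      have "w \<bullet> w = ?g^2" using nw by (simp add: power2_norm_eq_inner[symmetric])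
      moreover have "?n0 \<bullet> ?n0 = (norm ?n0)^2" by (simp add: power2_norm_eq_inner)
      ultimately show ?thesis using gsq by simp
    qed
    finally show ?thesis unfolding CRQ_feasible_def
      using wS Ct_n0[OF rankC] by (simp add: matrix_vector_right_distrib)
  qed
  have uSig: "u \<in> op.Sig" using uS nu unfolding op.Sig_def by simp
  have crq_min: "CRQ_minimizer A C b (u + ?n0)"
    unfolding CRQ_minimizer_def
  proof (intro conjI allI impI)
    show "CRQ_feasible C b (u + ?n0)" by (rule Sig_feas[OF uSig])
    fix v' assume fv: "CRQ_feasible C b v'"
    have c1: "transpose C *v (u + ?n0) = b" using Sig_feas[OF uSig] unfolding CRQ_feasible_def by simp
    have c2: "transpose C *v v' = b" using fv unfolding CRQ_feasible_def by simp
    show "(u + ?n0) \<bullet> (A *v (u + ?n0)) \<le> v' \<bullet> (A *v v')"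
      unfolding Avv[OF c1] Avv[OF c2] using umin feas_Sig[OF fv] by simp
  qed
  have crq_uniq: "v = u + ?n0" if "CRQ_minimizer A C b v" for v
  proof -
    have fv: "CRQ_feasible C b v" and le: "v \<bullet> (A *v v) \<le> (u + ?n0) \<bullet> (A *v (u + ?n0))"
      using that Sig_feas[OF uSig] unfolding CRQ_minimizer_def by auto
    have c1: "transpose C *v (u + ?n0) = b" using Sig_feas[OF uSig] unfolding CRQ_feasible_def by simp
    have c2: "transpose C *v v = b" using fv unfolding CRQ_feasible_def by simp
    have "op.qf (v - ?n0) \<le> op.qf u" using le unfolding Avv[OF c1] Avv[OF c2] by simp
    then have "v - ?n0 = u" using uuniq feas_Sig[OF fv] by blast
    then show ?thesis by (simp add: algebra_simps)
  qed
  show ?thesis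
  proof (intro conjI allI impI)
    show "\<exists>\<mu> x. rLG_minimizer ?M ?r ?g ?k \<mu> x" using rmin by blast
  next
    fix \<mu> x assume rm: "rLG_minimizer ?M ?r ?g ?k \<mu> x"
    have f1: "rLG_feasible ?M ?r ?g ?k \<mu> x" and le1: "\<mu> \<le> mu"
      using rm feas unfolding rLG_minimizer_def by auto
    have LGx: "op.LGf \<mu> (Qmul ?M ?r ?k x)" by (rule rLG_LG[OF f1])
    have "mu \<le> \<mu>" using LGmin LGx by blast
    then have mueq: "\<mu> = mu" using le1 by simp
    have ueq: "Qmul ?M ?r ?k x = u"
    proof -
      have "Qmul ?M ?r ?k x \<in> ?S" and "?M *v Qmul ?M ?r ?k x - mu *\<^sub>R Qmul ?M ?r ?k x = - ?r"
        using LGx mueq unfolding op.LGf_def by auto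
      then show ?thesis using op.LG_unique[OF pd _ uS _ lgu] by blast
    qed
    have LGsol: "LG_solution A C b \<mu> u"
      unfolding LG_solution_def LG_feasible_eq using LGu mueq LGmin by simp
    show "let u' = Qmul ?M ?r ?k x in LG_solution A C b \<mu> u' \<and> CRQ_minimizer A C b (u' + ?n0)
        \<and> (\<forall>v. CRQ_minimizer A C b v \<longrightarrow> v = u' + ?n0)"
      unfolding Let_def ueq using LGsol crq_min crq_uniq by blast
  qed
qed

end
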